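(* If $G$ is a connected locally Dirac graph of order $n \ge 9$, then $\operatorname{diam}(G) \le \lfloor n/3 \rfloor - 1$. Moreover, this bound is sharp: for every integer $m \ge 3$, the graph $P_m \boxtimes K_3$ is a connected locally Dirac graph of order $n=3m$ with diameter $n/3 - 1 = m-1$.
   Context: A graph $G$ is locally Dirac if for every vertex $v \in V(G)$ and every $u \in N(v)$, $\deg_{\langle N(v)\rangle}(u) \ge \deg_G(v)/2$, where $N(v)$ is the open neighbourhood of $v$ and $\langle N(v)\rangle$ the subgraph induced by it. $P_m$ is the path on $m$ vertices, $K_3$ the triangle, and $G\boxtimes H$ the strong product: vertex set $V(G)\times V(H)$, with $(u,v)\sim(x,y)$ iff ($u=x$ and $vy\in E(H)$) or ($v=y$ and $ux\in E(G)$) or ($ux\in E(G)$ and $vy\in E(H)$). *)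

theory Defs
  imports Complex_Main
begin

definition simple_graph :: "'a set \<Rightarrow> ('a \<Rightarrow> 'a \<Rightarrow> bool) \<Rightarrow> bool" where
  "simple_graph V E \<longleftrightarrow> finite V \<and>
     (\<forall>u v. E u v \<longrightarrow> u \<in> V \<and> v \<in> V) \<and>
     (\<forall>u v. E u v \<longrightarrow> E v u) \<and> (\<forall>u. \<not> E u u)"

definition nbhd :: "'a set \<Rightarrow> ('a \<Rightarrow> 'a \<Rightarrow> bool) \<Rightarrow> 'a \<Rightarrow> 'a set" where
  "nbhd V E v = {u \<in> V. E v u}"

definition deg :: "'a set \<Rightarrow> ('a \<Rightarrow> 'a \<Rightarrow> bool) \<Rightarrow> 'a \<Rightarrow> nat" where
  "deg V E v = card (nbhd V E v)"

definition induced_rel :: "'a set \<Rightarrow> ('a \<Rightarrow> 'a \<Rightarrow> bool) \<Rightarrow> 'a \<Rightarrow> 'a \<Rightarrow> bool" where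
  "induced_rel S E u v \<longleftrightarrow> u \<in> S \<and> v \<in> S \<and> E u v"

definition locally_dirac :: "'a set \<Rightarrow> ('a \<Rightarrow> 'a \<Rightarrow> bool) \<Rightarrow> bool" where
  "locally_dirac V E \<longleftrightarrow>
     (\<forall>v\<in>V. \<forall>u\<in>nbhd V E v.
        real (deg (nbhd V E v) (induced_rel (nbhd V E v) E) u) \<ge> real (deg V E v) / 2)"

definition walk :: "'a set \<Rightarrow> ('a \<Rightarrow> 'a \<Rightarrow> bool) \<Rightarrow> 'a list \<Rightarrow> bool" where
  "walk V E xs \<longleftrightarrow> xs \<noteq> [] \<and> set xs \<subseteq> V \<and>
     (\<forall>i. Suc i < length xs \<longrightarrow> E (xs ! i) (xs ! Suc i))"

definition connected_graph :: "'a set \<Rightarrow> ('a \<Rightarrow> 'a \<Rightarrow> bool) \<Rightarrow> bool" where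
  "connected_graph V E \<longleftrightarrow> V \<noteq> {} \<and>
     (\<forall>u\<in>V. \<forall>v\<in>V. \<exists>xs. walk V E xs \<and> hd xs = u \<and> last xs = v)"

definition gdist :: "'a set \<Rightarrow> ('a \<Rightarrow> 'a \<Rightarrow> bool) \<Rightarrow> 'a \<Rightarrow> 'a \<Rightarrow> nat" where
  "gdist V E u v = (LEAST k. \<exists>xs. walk V E xs \<and> hd xs = u \<and> last xs = v \<and> length xs = Suc k)"

definition diam :: "'a set \<Rightarrow> ('a \<Rightarrow> 'a \<Rightarrow> bool) \<Rightarrow> nat" where
  "diam V E = Max {gdist V E u v | u v. u \<in> V \<and> v \<in> V}"

definition path_V :: "nat \<Rightarrow> nat set" where "path_V m = {0..<m}"
definition path_E :: "nat \<Rightarrow> nat \<Rightarrow> nat \<Rightarrow> bool" where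
  "path_E m i j \<longleftrightarrow> i < m \<and> j < m \<and> (Suc i = j \<or> Suc j = i)"

definition K3_V :: "nat set" where "K3_V = {0, 1, 2}"
definition K3_E :: "nat \<Rightarrow> nat \<Rightarrow> bool" where
  "K3_E i j \<longleftrightarrow> i \<in> K3_V \<and> j \<in> K3_V \<and> i \<noteq> j"

definition strong_V :: "'a set \<Rightarrow> 'b set \<Rightarrow> ('a \<times> 'b) set" where
  "strong_V V1 V2 = V1 \<times> V2"
definition strong_E :: "'a set \<Rightarrow> ('a \<Rightarrow> 'a \<Rightarrow> bool) \<Rightarrow> 'b set \<Rightarrow> ('b \<Rightarrow> 'b \<Rightarrow> bool)
    \<Rightarrow> 'a \<times> 'b \<Rightarrow> 'a \<times> 'b \<Rightarrow> bool" where
  "strong_E V1 E1 V2 E2 p q \<longleftrightarrow> p \<in> V1 \<times> V2 \<and> q \<in> V1 \<times> V2 \<and>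
     ((fst p = fst q \<and> E2 (snd p) (snd q)) \<or> (snd p = snd q \<and> E1 (fst p) (fst q))
      \<or> (E1 (fst p) (fst q) \<and> E2 (snd p) (snd q)))"

end

theory Submission
  imports Defs
begin


definition reach :: "'a set \<Rightarrow> ('a \<Rightarrow> 'a \<Rightarrow> bool) \<Rightarrow> nat \<Rightarrow> 'a \<Rightarrow> 'a \<Rightarrow> bool" where
  "reach V E k u v \<longleftrightarrow> (\<exists>xs. walk V E xs \<and> hd xs = u \<and> last xs = v \<and> length xs = Suc k)"

lemma gdist_Least: "gdist V E u v = (LEAST k. reach V E k u v)"
  by (simp add: gdist_def reach_def)

lemma reach_refl: "u \<in> V \<Longrightarrow> reach V E 0 u u"
  unfolding reach_def walk_def by (rule exI[of _ "[u]"]) auto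

lemma reach_0: "reach V E 0 u v \<Longrightarrow> u = v"
  unfolding reach_def by (auto simp: length_Suc_conv)

lemma reach_step:
  assumes "reach V E k u a" "E a x" "x \<in> V"
  shows "reach V E (Suc k) u x"
proof -
  obtain xs where xs: "walk V E xs" "hd xs = u" "last xs = a" "length xs = Suc k"
    using assms(1) unfolding reach_def by blast
  have "walk V E (xs @ [x])"
    unfolding walk_def
  proof (intro conjI allI impI)
    show "xs @ [x] \<noteq> []" by simp
    show "set (xs @ [x]) \<subseteq> V" using xs(1) assms(3) unfolding walk_def by auto
  next
    fix i assume i: "Suc i < length (xs @ [x])"
    show "E ((xs @ [x]) ! i) ((xs @ [x]) ! Suc i)"
    proof (cases "Suc i < length xs")
      case True
      then show ?thesis using xs(1) unfolding walk_def by (auto simp: nth_append)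
    next
      case False
      then have "i = length xs - 1" using i by simp
      moreover have "xs ! (length xs - 1) = a" using xs(3,4) by (metis last_conv_nth list.size(3) nat.distinct(1))
      ultimately show ?thesis using assms(2) xs(4) by (auto simp: nth_append)
    qed
  qed
  moreover have "hd (xs @ [x]) = u" using xs by (cases xs) auto
  ultimately show ?thesis unfolding reach_def using xs(4) by (intro exI[of _ "xs @ [x]"]) auto
qed

lemma reach_pred:
  assumes "reach V E (Suc k) u x"
  shows "\<exists>y. reach V E k u y \<and> E y x"
proof -
  obtain xs where xs: "walk V E xs" "hd xs = u" "last xs = x" "length xs = Suc (Suc k)"
    using assms(1) unfolding reach_def by blast
  let ?ys = "take (Suc k) xs"
  have w: "walk V E ?ys" using xs(1,4) unfolding walk_def
    by (auto dest: in_set_takeD)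
  have "hd ?ys = u" using xs by (cases xs) auto
  moreover have "last ?ys = xs ! k" using xs(4) by (subst last_conv_nth) auto
  moreover have "E (xs ! k) x" using xs(1,3,4) unfolding walk_def by (simp add: last_conv_nth) (metis lessI)
  ultimately show ?thesis using w xs(4) unfolding reach_def
    by (intro exI[of _ "xs ! k"]) auto
qed

lemma gdist_reach: "reach V E k u v \<Longrightarrow> reach V E (gdist V E u v) u v \<and> gdist V E u v \<le> k"
  unfolding gdist_Least by (metis LeastI Least_le)




lemma deg_induced:
  assumes "u \<in> nbhd V E v"
  shows "deg (nbhd V E v) (induced_rel (nbhd V E v) E) u = card (nbhd V E v \<inter> nbhd V E u)"
proof -
  have "nbhd (nbhd V E v) (induced_rel (nbhd V E v) E) u = nbhd V E v \<inter> nbhd V E u"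
    using assms unfolding nbhd_def induced_rel_def by auto
  then show ?thesis unfolding deg_def by simp
qed

locale ldg =
  fixes V :: "'a set" and E :: "'a \<Rightarrow> 'a \<Rightarrow> bool"
  assumes sg: "simple_graph V E" and cg: "connected_graph V E" and ld: "locally_dirac V E"
begin

abbreviation N where "N \<equiv> nbhd V E"

lemma finV: "finite V" using sg unfolding simple_graph_def by auto
lemma EV: "E u v \<Longrightarrow> u \<in> V \<and> v \<in> V" using sg unfolding simple_graph_def by auto
lemma Esym: "E u v \<Longrightarrow> E v u" using sg unfolding simple_graph_def by auto
lemma Eirr: "\<not> E u u" using sg unfolding simple_graph_def by auto
lemma N_iff: "x \<in> N v \<longleftrightarrow> E v x" unfolding nbhd_def using EV by auto
lemma finN: "finite (N v)" unfolding nbhd_def using finV by auto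
lemma NV: "N v \<subseteq> V" unfolding nbhd_def by auto

lemma conn: "u \<in> V \<Longrightarrow> v \<in> V \<Longrightarrow> \<exists>k. reach V E k u v"
proof -
  assume "u \<in> V" "v \<in> V"
  then obtain xs where "walk V E xs" "hd xs = u" "last xs = v"
    using cg unfolding connected_graph_def by blast
  then show ?thesis unfolding reach_def walk_def
    by (intro exI[of _ "length xs - 1"] exI[of _ xs]) auto
qed

lemma dist_reach: "u \<in> V \<Longrightarrow> v \<in> V \<Longrightarrow> reach V E (gdist V E u v) u v"
  using conn gdist_reach by metis

lemma dist_le: "reach V E k u v \<Longrightarrow> gdist V E u v \<le> k"
  using gdist_reach by metis

lemma dist_self: "u \<in> V \<Longrightarrow> gdist V E u u = 0"
  using dist_le[OF reach_refl] by auto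

lemma dist_0: "u \<in> V \<Longrightarrow> v \<in> V \<Longrightarrow> gdist V E u v = 0 \<Longrightarrow> u = v"
  using dist_reach reach_0 by metis

lemma dist_edge: "v \<in> V \<Longrightarrow> E a x \<Longrightarrow> gdist V E v x \<le> Suc (gdist V E v a)"
  using dist_le[OF reach_step[OF dist_reach]] EV by metis

lemma dist_pred:
  assumes "v \<in> V" "x \<in> V" "gdist V E v x = Suc k"
  shows "\<exists>y\<in>V. E y x \<and> gdist V E v y = k"
proof -
  obtain y where y: "reach V E k v y" "E y x"
    using reach_pred dist_reach[OF assms(1,2)] assms(3) by metis
  have "gdist V E v y \<le> k" using dist_le[OF y(1)] .
  moreover have "Suc k \<le> Suc (gdist V E v y)" using dist_edge[OF assms(1) y(2)] assms(3) by simp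
  ultimately show ?thesis using y EV by force
qed

lemma dist_down:
  assumes "v \<in> V" shows "x \<in> V \<Longrightarrow> j \<le> gdist V E v x \<Longrightarrow> \<exists>y\<in>V. gdist V E v y = j"
proof (induction "gdist V E v x - j" arbitrary: x)
  case 0
  then show ?case by (intro bexI[of _ x]) auto
next
  case (Suc n)
  then obtain k where k: "gdist V E v x = Suc k" by (cases "gdist V E v x") auto
  then obtain y where y: "y \<in> V" "gdist V E v y = k" using dist_pred[OF assms] Suc.prems by blast
  show ?case using Suc.hyps(1)[of y] Suc.hyps(2) Suc.prems y k by simp
qed

lemma common2:
  assumes "E w p" "E w x" "p \<noteq> x" "\<not> E p x"
  shows "card (N w \<inter> N p \<inter> N x) \<ge> 2"
proof -
  have w: "w \<in> V" using EV assms by blast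
  have pN: "p \<in> N w" and xN: "x \<in> N w" using assms N_iff by auto
  have dA: "real (card (N w \<inter> N p)) \<ge> real (card (N w)) / 2"
    using ld w pN deg_induced[OF pN] unfolding locally_dirac_def deg_def[of V] by metis
  have dB: "real (card (N w \<inter> N x)) \<ge> real (card (N w)) / 2"
    using ld w xN deg_induced[OF xN] unfolding locally_dirac_def deg_def[of V] by metis
  have sub: "(N w \<inter> N p) \<union> (N w \<inter> N x) \<subseteq> N w - {p, x}"
    using assms Eirr Esym N_iff by auto
  have "card (N w - {p, x}) = card (N w) - 2"
    using pN xN assms(3) finN by (subst card_Diff_subset) auto
  then have cU: "card ((N w \<inter> N p) \<union> (N w \<inter> N x)) \<le> card (N w) - 2"
    using card_mono[OF _ sub] finN by (metis finite_Diff)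
  have "card ((N w \<inter> N p) \<union> (N w \<inter> N x)) + card ((N w \<inter> N p) \<inter> (N w \<inter> N x))
        = card (N w \<inter> N p) + card (N w \<inter> N x)"
    using finN card_Un_Int[of "N w \<inter> N p" "N w \<inter> N x"] by auto
  moreover have "card (N w) \<ge> 2"
  proof -
    have "card {p, x} \<le> card (N w)" using pN xN by (intro card_mono[OF finN]) auto
    then show ?thesis using assms(3) by simp
  qed
  ultimately have "card ((N w \<inter> N p) \<inter> (N w \<inter> N x)) \<ge> 2" using dA dB cU by linarith
  moreover have "(N w \<inter> N p) \<inter> (N w \<inter> N x) = N w \<inter> N p \<inter> N x" by auto
  ultimately show ?thesis by simp
qed

end



context ldg begin

abbreviation L where "L v i \<equiv> {y \<in> V. gdist V E v y = i}"

lemma finL: "finite (L v i)" using finV by auto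

lemma L0: "v \<in> V \<Longrightarrow> L v 0 = {v}"
  using dist_0 dist_self by auto

lemma L1: assumes "v \<in> V" shows "L v 1 = N v"
proof
  show "L v 1 \<subseteq> N v"
  proof
    fix x assume x: "x \<in> L v 1"
    then obtain y where "y \<in> V" "E y x" "gdist V E v y = 0" using dist_pred[OF assms, of x 0] by auto
    then show "x \<in> N v" using dist_0[OF assms] N_iff by metis
  qed
  show "N v \<subseteq> L v 1"
  proof
    fix x assume x: "x \<in> N v"
    then have "E v x" "x \<in> V" using N_iff NV by auto
    then have "gdist V E v x \<le> 1" using dist_edge[OF assms, of v x] dist_self[OF assms] by simp
    moreover have "x \<noteq> v" using \<open>E v x\<close> Eirr by auto
    then have "gdist V E v x \<noteq> 0" using dist_self assms \<open>x \<in> V\<close> dist_0 by metis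
    ultimately show "x \<in> L v 1" using \<open>x \<in> V\<close> by simp
  qed
qed

lemma layer3:
  assumes v: "v \<in> V" and x: "x \<in> V" "gdist V E v x = Suc (Suc i)"
  shows "card (L v (Suc i)) \<ge> 3"
proof -
  obtain w where w: "w \<in> V" "E w x" "gdist V E v w = Suc i" using dist_pred[OF v x] by blast
  obtain p where p: "p \<in> V" "E p w" "gdist V E v p = i" using dist_pred[OF v w(1) w(3)] by blast
  have npx: "\<not> E p x" using dist_edge[OF v, of p x] p(3) x(2) by auto
  have pnx: "p \<noteq> x" using p(3) x(2) by auto
  let ?C = "N w \<inter> N p \<inter> N x"
  have c2: "card ?C \<ge> 2" using common2[OF Esym[OF p(2)] w(2) pnx npx] .
  have sub: "insert w ?C \<subseteq> L v (Suc i)"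
  proof
    fix y assume "y \<in> insert w ?C"
    then show "y \<in> L v (Suc i)"
    proof
      assume "y = w" then show ?thesis using w by simp
    next
      assume y: "y \<in> ?C"
      then have "E p y" "E y x" "y \<in> V" using N_iff NV Esym by auto
      then show ?thesis using dist_edge[OF v, of p y] dist_edge[OF v, of y x] p(3) x(2) by auto
    qed
  qed
  have "w \<notin> ?C" using Eirr N_iff by auto
  then have "card (insert w ?C) \<ge> 3" using c2 finN by (simp add: card_insert_if)
  then show ?thesis using card_mono[OF finL sub] by simp
qed

lemma count_sum:
  assumes "finite A" shows "card {a \<in> A. P a} = (\<Sum>a\<in>A. if P a then 1 else 0 :: nat)"
proof -
  have "{a\<in>A. P a} = A \<inter> Collect P" by auto
  then show ?thesis using assms by (simp add: sum.If_cases)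
qed

end



context ldg begin

lemma L2_common3:
  assumes v: "v \<in> V" and x: "x \<in> L v 2"
  shows "card (N x \<inter> N v) \<ge> 3"
proof -
  have xV: "x \<in> V" and xd: "gdist V E v x = Suc 1" using x by auto
  obtain w where w: "w \<in> V" "E w x" "gdist V E v w = 1" using dist_pred[OF v xV xd] by blast
  have "w \<in> N v" using L1[OF v] w by auto
  then have Evw: "E v w" using N_iff by auto
  have npx: "\<not> E v x" using dist_edge[OF v, of v x] dist_self[OF v] xd by auto
  have pnx: "v \<noteq> x" using dist_self[OF v] xd by auto
  let ?C = "N w \<inter> N v \<inter> N x"
  have c2: "card ?C \<ge> 2" using common2[OF Esym[OF Evw] w(2) pnx npx] .
  have sub: "insert w ?C \<subseteq> N x \<inter> N v" using w Evw N_iff Esym by auto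
  have "w \<notin> ?C" using Eirr N_iff by auto
  then have "card (insert w ?C) \<ge> 3" using c2 finN by (simp add: card_insert_if)
  then show ?thesis using card_mono[OF _ sub] finN by (meson finite_Int le_trans)
qed

lemma out_bound:
  assumes v: "v \<in> V" and a: "a \<in> N v"
  shows "card (N a \<inter> L v 2) + 1 + card (N a \<inter> N v) \<le> card (N a)"
proof -
  have "{v} \<union> (N a \<inter> N v) \<union> (N a \<inter> L v 2) \<subseteq> N a" using a N_iff Esym by auto
  moreover have "card ({v} \<union> (N a \<inter> N v) \<union> (N a \<inter> L v 2)) = 1 + card (N a \<inter> N v) + card (N a \<inter> L v 2)"
  proof -
    have d1: "v \<notin> N a \<inter> N v" using Eirr N_iff by auto
    have d2: "(N a \<inter> N v) \<inter> (N a \<inter> L v 2) = {}"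
    proof -
      have "\<And>y. y \<in> N v \<Longrightarrow> gdist V E v y = 1" using L1[OF v] by auto
      then show ?thesis by auto
    qed
    have d3: "v \<notin> L v 2" using dist_self[OF v] by auto
    have "card ({v} \<union> (N a \<inter> N v) \<union> (N a \<inter> L v 2)) = card ({v} \<union> (N a \<inter> N v)) + card (N a \<inter> L v 2)"
      using d2 d3 finN finL by (intro card_Un_disjoint) auto
    moreover have "card ({v} \<union> (N a \<inter> N v)) = 1 + card (N a \<inter> N v)" using d1 finN by simp
    ultimately show ?thesis by simp
  qed
  ultimately show ?thesis using card_mono[OF finN, of "{v} \<union> (N a \<inter> N v) \<union> (N a \<inter> L v 2)" a] by linarith
qed

lemma deg5:
  assumes v: "v \<in> V" and n9: "card V \<ge> 9"
  shows "card (N v) \<ge> 5"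
proof (rule ccontr)
  assume "\<not> ?thesis"
  then have d4: "card (N v) \<le> 4" by simp
  have b: "card (N a \<inter> L v 2) \<le> 2" if a: "a \<in> N v" for a
  proof -
    have "v \<in> N a" using a N_iff Esym by auto
    moreover have aV: "a \<in> V" using a NV by auto
    ultimately have "real (card (N a)) / 2 \<le> real (deg (N a) (induced_rel (N a) E) v)"
      using ld unfolding locally_dirac_def deg_def[of V] by blast
    then have "real (card (N a \<inter> N v)) \<ge> real (card (N a)) / 2"
      using deg_induced[OF \<open>v \<in> N a\<close>] by simp
    moreover have "card (N a \<inter> N v) \<le> 3"
    proof -
      have "N a \<inter> N v \<subseteq> N v - {a}" using Eirr N_iff by auto
      then have "card (N a \<inter> N v) \<le> card (N v - {a})" using finN by (intro card_mono) auto
      then show ?thesis using a d4 finN by simp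
    qed
    ultimately show ?thesis using out_bound[OF v a] by linarith
  qed
  have eq: "(\<Sum>x\<in>L v 2. card (N x \<inter> N v)) = (\<Sum>a\<in>N v. card (N a \<inter> L v 2))"
  proof -
    have "(\<Sum>x\<in>L v 2. card (N x \<inter> N v)) = (\<Sum>x\<in>L v 2. \<Sum>a\<in>N v. if E x a then 1 else 0)"
    proof (rule sum.cong[OF refl])
      fix x assume "x \<in> L v 2"
      have "N x \<inter> N v = {a \<in> N v. E x a}" using N_iff by auto
      then show "card (N x \<inter> N v) = (\<Sum>a\<in>N v. if E x a then 1 else 0)" using count_sum[OF finN] by simp
    qed
    also have "\<dots> = (\<Sum>a\<in>N v. \<Sum>x\<in>L v 2. if E x a then 1 else 0)" by (rule sum.swap)
    also have "\<dots> = (\<Sum>a\<in>N v. card (N a \<inter> L v 2))"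
    proof (rule sum.cong[OF refl])
      fix a assume "a \<in> N v"
      have "N a \<inter> L v 2 = {x \<in> L v 2. E x a}" using N_iff Esym NV by auto
      then show "(\<Sum>x\<in>L v 2. if E x a then 1 else 0) = card (N a \<inter> L v 2)" using count_sum[OF finL] by simp
    qed
    finally show ?thesis .
  qed
  have "3 * card (L v 2) \<le> (\<Sum>x\<in>L v 2. card (N x \<inter> N v))"
    using sum_mono[of "L v 2" "\<lambda>_. 3" "\<lambda>x. card (N x \<inter> N v)"] L2_common3[OF v] by simp
  moreover have "(\<Sum>a\<in>N v. card (N a \<inter> L v 2)) \<le> 2 * card (N v)"
    using sum_mono[of "N v" "\<lambda>a. card (N a \<inter> L v 2)" "\<lambda>_. 2"] b by simp
  ultimately have cL2: "card (L v 2) \<le> 2" using eq d4 by linarith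
  have no3: "\<not> (\<exists>x\<in>V. gdist V E v x = 3)"
  proof
    assume "\<exists>x\<in>V. gdist V E v x = 3"
    then obtain x where "x \<in> V" "gdist V E v x = Suc (Suc 1)" by auto
    from layer3[OF v this] cL2 show False by (simp add: numeral_2_eq_2)
  qed
  have le2: "gdist V E v x \<le> 2" if "x \<in> V" for x
  proof (rule ccontr)
    assume "\<not> ?thesis"
    then have "3 \<le> gdist V E v x" by simp
    then show False using dist_down[OF v that] no3 by blast
  qed
  have "V \<subseteq> L v 0 \<union> L v 1 \<union> L v 2"
  proof
    fix x assume "x \<in> V" then show "x \<in> L v 0 \<union> L v 1 \<union> L v 2" using le2[of x] by auto
  qed
  then have "card V \<le> card (L v 0 \<union> L v 1 \<union> L v 2)" using finL by (intro card_mono) auto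
  also have "\<dots> \<le> card (L v 0) + card (L v 1) + card (L v 2)"
    using card_Un_le[of "L v 0 \<union> L v 1" "L v 2"] card_Un_le[of "L v 0" "L v 1"] by linarith
  also have "\<dots> \<le> 1 + 4 + 2" using L0[OF v] L1[OF v] d4 cL2 by simp
  finally show False using n9 by simp
qed

end



context ldg begin

lemma part1:
  assumes n9: "card V \<ge> 9"
  shows "diam V E \<le> card V div 3 - 1"
proof -
  let ?S = "{gdist V E u v | u v. u \<in> V \<and> v \<in> V}"
  have Seq: "?S = (\<lambda>(u,v). gdist V E u v) ` (V \<times> V)" by auto
  have finS: "finite ?S" unfolding Seq using finV by simp
  have Vne: "V \<noteq> {}" using cg unfolding connected_graph_def by auto
  then have Sne: "?S \<noteq> {}" by auto
  have "diam V E \<in> ?S" unfolding diam_def using Max_in[OF finS Sne] .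
  then obtain v0 vD where v0: "v0 \<in> V" and vD: "vD \<in> V" and D: "gdist V E v0 vD = diam V E" by auto
  have maxd: "gdist V E v0 y \<le> diam V E" if "y \<in> V" for y
    unfolding diam_def using Max_ge[OF finS] v0 that by blast
  define D' where "D' = diam V E"
  show ?thesis
  proof (cases "D' \<le> 2")
    case True
    have "card V div 3 \<ge> 3" using n9 by simp
    then show ?thesis using True D'_def by simp
  next
    case False
    then have D3: "D' \<ge> 3" by simp
    define f where "f i = card (L v0 i)" for i
    have mid: "f i \<ge> 3" if i1: "1 \<le> i" and i2: "i \<le> D' - 1" for i
    proof -
      define j where "j = i - 1"
      have j: "i = Suc j" using i1 j_def by simp
      have "Suc (Suc j) \<le> gdist V E v0 vD" using D D'_def i2 j D3 by linarith
      then obtain x where "x \<in> V" "gdist V E v0 x = Suc (Suc j)"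
        using dist_down[OF v0 vD, of "Suc (Suc j)"] by auto
      from layer3[OF v0 this] show ?thesis using j f_def by simp
    qed
    have start: "f 0 + f 1 \<ge> 6"
      using L0[OF v0] L1[OF v0] deg5[OF v0 n9] f_def by simp
    have fin: "f (D' - 1) + f D' \<ge> 6"
    proof -
      have sub: "insert vD (N vD) \<subseteq> L v0 (D' - 1) \<union> L v0 D'"
      proof
        fix y assume "y \<in> insert vD (N vD)"
        then show "y \<in> L v0 (D' - 1) \<union> L v0 D'"
        proof
          assume "y = vD" then show ?thesis using vD D D'_def by simp
        next
          assume "y \<in> N vD"
          then have "E y vD" "y \<in> V" using N_iff NV Esym by auto
          then show ?thesis using dist_edge[OF v0, of y vD] maxd[of y] D D'_def by auto
        qed
      qed
      have "vD \<notin> N vD" using Eirr N_iff by auto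
      then have "card (insert vD (N vD)) \<ge> 6" using deg5[OF vD n9] finN by simp
      moreover have "card (L v0 (D' - 1) \<union> L v0 D') = f (D' - 1) + f D'"
        unfolding f_def using D3 by (intro card_Un_disjoint finL) auto
      moreover have "card (insert vD (N vD)) \<le> card (L v0 (D' - 1) \<union> L v0 D')"
        using card_mono[OF finite_UnI[OF finL finL] sub] .
      ultimately show ?thesis by linarith
    qed
    have ind: "Suc k \<le> D' - 1 \<Longrightarrow> (\<Sum>i<Suc (Suc k). f i) \<ge> 3 * Suc (Suc k)" for k
    proof (induction k)
      case 0 then show ?case using start by simp
    next
      case (Suc k)
      then have "f (Suc (Suc k)) \<ge> 3" using mid[of "Suc (Suc k)"] by simp
      then show ?case using Suc by simp
    qed
    have sumeq: "(\<Sum>i<Suc D'. f i) = (\<Sum>i<D' - 1. f i) + (f (D' - 1) + f D')"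
    proof -
      define k where "k = D' - 1"
      have k: "D' = Suc k" using D3 k_def by simp
      then show ?thesis by simp
    qed
    have lowsum: "(\<Sum>i<D' - 1. f i) \<ge> 3 * (D' - 1)"
      using ind[of "D' - 3"] D3 by (simp add: numeral_3_eq_3 Suc_diff_Suc)
    have "3 * (D' + 1) = 3 * (D' - 1) + 6" using D3 by simp
    also have "\<dots> \<le> (\<Sum>i<D' - 1. f i) + (f (D' - 1) + f D')" using add_le_mono[OF lowsum fin] .
    finally have lo: "(\<Sum>i<Suc D'. f i) \<ge> 3 * (D' + 1)" using sumeq by simp
    have "(\<Sum>i<Suc D'. f i) = card (\<Union>i<Suc D'. L v0 i)"
      unfolding f_def by (rule card_UN_disjoint[symmetric]) (auto simp: finL)
    also have "\<dots> \<le> card V" using finV by (intro card_mono) auto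
    finally have "3 * (D' + 1) \<le> card V" using lo by linarith
    then have "3 * (D' + 1) div 3 \<le> card V div 3" by (rule div_le_mono)
    then have "D' + 1 \<le> card V div 3" by simp
    then show ?thesis using D'_def by simp
  qed
qed

end



abbreviation "PW m \<equiv> strong_V (path_V m) K3_V"
abbreviation "PF m \<equiv> strong_E (path_V m) (path_E m) K3_V K3_E"

lemma PW_eq: "PW m = {0..<m} \<times> {0,1,2}"
  by (simp add: strong_V_def path_V_def K3_V_def)

lemma PF_char: "PF m p q \<longleftrightarrow> p \<in> PW m \<and> q \<in> PW m \<and> p \<noteq> q \<and> fst p \<le> Suc (fst q) \<and> fst q \<le> Suc (fst p)"
  unfolding PW_eq
  by (cases p; cases q) (auto simp: strong_E_def path_V_def K3_V_def path_E_def K3_E_def)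

lemma PW_card: "card (PW m) = 3 * m"
  unfolding PW_eq by (simp add: card_cartesian_product)

lemma PW_sg: "simple_graph (PW m) (PF m)"
  unfolding simple_graph_def using PF_char by (auto simp: PW_eq)

lemma up:
  assumes "i < m" "a \<in> {0,1,2::nat}"
  shows "i + Suc n < m \<Longrightarrow> b \<in> {0,1,2} \<Longrightarrow> reach (PW m) (PF m) (Suc n) (i,a) (i + Suc n, b)"
proof (induction n arbitrary: b)
  case 0
  have r: "reach (PW m) (PF m) 0 (i,a) (i,a)" using assms by (intro reach_refl) (simp add: PW_eq)
  have e: "PF m (i,a) (i + Suc 0, b)" using 0 assms by (auto simp: PF_char PW_eq)
  have x: "(i + Suc 0, b) \<in> PW m" using 0 by (auto simp: PW_eq)
  show ?case using reach_step[OF r e x] .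
next
  case (Suc n)
  have r: "reach (PW m) (PF m) (Suc n) (i,a) (i + Suc n, a)" using Suc assms by auto
  have e: "PF m (i + Suc n, a) (i + Suc (Suc n), b)" using Suc assms by (auto simp: PF_char PW_eq)
  have x: "(i + Suc (Suc n), b) \<in> PW m" using Suc by (auto simp: PW_eq)
  show ?case using reach_step[OF r e x] .
qed

lemma down:
  assumes "i < m" "a \<in> {0,1,2::nat}"
  shows "j + Suc n = i \<Longrightarrow> b \<in> {0,1,2} \<Longrightarrow> reach (PW m) (PF m) (Suc n) (i,a) (j, b)"
proof (induction n arbitrary: b j)
  case 0
  have r: "reach (PW m) (PF m) 0 (i,a) (i,a)" using assms by (intro reach_refl) (simp add: PW_eq)
  have e: "PF m (i,a) (j, b)" using 0 assms by (auto simp: PF_char PW_eq)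
  have x: "(j, b) \<in> PW m" using 0 assms by (auto simp: PW_eq)
  show ?case using reach_step[OF r e x] .
next
  case (Suc n)
  have r: "reach (PW m) (PF m) (Suc n) (i,a) (Suc j, a)" using Suc.IH[of "Suc j" a] Suc.prems assms by simp
  have e: "PF m (Suc j, a) (j, b)" using Suc.prems assms by (auto simp: PF_char PW_eq)
  have x: "(j, b) \<in> PW m" using Suc.prems assms by (auto simp: PW_eq)
  show ?case using reach_step[OF r e x] .
qed

lemma reach_any:
  assumes m: "m \<ge> 2" and p: "p \<in> PW m" and q: "q \<in> PW m"
  shows "\<exists>k. k \<le> m - 1 \<and> reach (PW m) (PF m) k p q"
proof -
  obtain i a where pq1: "p = (i,a)" by (cases p)
  obtain j b where pq2: "q = (j,b)" by (cases q)
  have i: "i < m" "a \<in> {0,1,2}" using p pq1 by (auto simp: PW_eq)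
  have j: "j < m" "b \<in> {0,1,2}" using q pq2 by (auto simp: PW_eq)
  consider "i < j" | "j < i" | "i = j" by linarith
  then show ?thesis
  proof cases
    case 1
    define n where "n = j - i - 1"
    have n: "j = i + Suc n" using 1 n_def by simp
    have "reach (PW m) (PF m) (Suc n) (i,a) (j,b)" using up[OF i, of n b] n j by simp
    moreover have "Suc n \<le> m - 1" using n j by simp
    ultimately show ?thesis using pq1 pq2 by blast
  next
    case 2
    define n where "n = i - j - 1"
    have n: "i = j + Suc n" using 2 n_def by simp
    have "reach (PW m) (PF m) (Suc n) (i,a) (j,b)" using down[OF i, of j n b] n j by simp
    moreover have "Suc n \<le> m - 1" using n i by simp
    ultimately show ?thesis using pq1 pq2 by blast
  next
    case 3
    show ?thesis
    proof (cases "a = b")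
      case True
      then have "reach (PW m) (PF m) 0 p q" using reach_refl[OF p] pq1 pq2 3 by simp
      then show ?thesis by blast
    next
      case False
      have r: "reach (PW m) (PF m) 0 (i,a) (i,a)" using reach_refl[OF p] pq1 by simp
      have e: "PF m (i,a) (i,b)" using False i j by (auto simp: PF_char PW_eq)
      have "reach (PW m) (PF m) (Suc 0) (i,a) (i,b)" using reach_step[OF r e] q pq2 3 by simp
      moreover have "Suc 0 \<le> m - 1" using m by simp
      ultimately show ?thesis using pq1 pq2 3 by blast
    qed
  qed
qed

lemma walk_fst:
  assumes w: "walk (PW m) (PF m) xs" and h: "fst (hd xs) = 0"
  shows "k < length xs \<Longrightarrow> fst (xs ! k) \<le> k"
proof (induction k)
  case 0 then show ?case using h w unfolding walk_def by (simp add: hd_conv_nth)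
next
  case (Suc k)
  then have "PF m (xs ! k) (xs ! Suc k)" using w unfolding walk_def by simp
  then show ?case using Suc by (auto simp: PF_char)
qed

lemma far:
  assumes "reach (PW m) (PF m) k (0,0) (m-1,0)"
  shows "m - 1 \<le> k"
proof -
  obtain xs where xs: "walk (PW m) (PF m) xs" "hd xs = (0,0)" "last xs = (m-1,0)" "length xs = Suc k"
    using assms unfolding reach_def by blast
  have "last xs = xs ! k" using xs(4) by (subst last_conv_nth) auto
  then have "xs ! k = (m-1, 0)" using xs(3) by simp
  then show ?thesis using walk_fst[OF xs(1), of k] xs by (metis fst_conv lessI)
qed




lemma PW_conn: assumes m: "m \<ge> 3" shows "connected_graph (PW m) (PF m)"
  unfolding connected_graph_def
proof (intro conjI ballI)
  show "PW m \<noteq> {}" using m by (auto simp: PW_eq)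
next
  fix u v assume "u \<in> PW m" "v \<in> PW m"
  then obtain k where "reach (PW m) (PF m) k u v" using reach_any[of m u v] m by auto
  then show "\<exists>xs. walk (PW m) (PF m) xs \<and> hd xs = u \<and> last xs = v" unfolding reach_def by blast
qed

lemma PW_diam: assumes m: "m \<ge> 3" shows "diam (PW m) (PF m) = m - 1"
proof -
  let ?S = "{gdist (PW m) (PF m) u v | u v. u \<in> PW m \<and> v \<in> PW m}"
  have Seq: "?S = (\<lambda>(u,v). gdist (PW m) (PF m) u v) ` (PW m \<times> PW m)" by auto
  have finS: "finite ?S" unfolding Seq by (simp add: PW_eq)
  have le: "x \<le> m - 1" if xS: "x \<in> ?S" for x
  proof -
    obtain u v where uv: "u \<in> PW m" "v \<in> PW m" "x = gdist (PW m) (PF m) u v" using xS by blast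
    obtain k where k: "k \<le> m - 1" "reach (PW m) (PF m) k u v" using reach_any[OF _ uv(1,2)] m by auto
    have "gdist (PW m) (PF m) u v \<le> k" using gdist_reach[OF k(2)] by simp
    then show ?thesis using k(1) uv(3) by simp
  qed
  have p0: "(0,0) \<in> PW m" and p1: "(m-1,0) \<in> PW m" using m by (auto simp: PW_eq)
  obtain k where "reach (PW m) (PF m) k (0,0) (m-1,0)" using reach_any[OF _ p0 p1] m by auto
  then have "reach (PW m) (PF m) (gdist (PW m) (PF m) (0,0) (m-1,0)) (0,0) (m-1,0)" using gdist_reach by metis
  then have g1: "m - 1 \<le> gdist (PW m) (PF m) (0,0) (m-1,0)" by (rule far)
  have gS: "gdist (PW m) (PF m) (0,0) (m-1,0) \<in> ?S" using p0 p1 by blast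
  have "gdist (PW m) (PF m) (0,0) (m-1,0) \<le> m - 1" by (rule le[OF gS])
  then have "gdist (PW m) (PF m) (0,0) (m-1,0) = m - 1" using g1 by simp
  then have mem: "m - 1 \<in> ?S" using gS by simp
  show ?thesis unfolding diam_def by (rule Max_eqI[OF finS le mem])
qed

lemma nb_PW: "x \<in> nbhd (PW m) (PF m) v \<longleftrightarrow> PF m v x"
  unfolding nbhd_def using PF_char by auto

lemma finNP: "finite (nbhd (PW m) (PF m) x)"
  by (rule finite_subset[of _ "PW m"]) (auto simp: nbhd_def PW_eq)

lemma PW_ld: assumes m: "m \<ge> 3" shows "locally_dirac (PW m) (PF m)"
  unfolding locally_dirac_def
proof (intro ballI)
  fix v u assume v: "v \<in> PW m" and u: "u \<in> nbhd (PW m) (PF m) v"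
  let ?N = "nbhd (PW m) (PF m)"
  obtain i a where va: "v = (i,a)" by (cases v)
  obtain j b where ub: "u = (j,b)" by (cases u)
  have Fvu: "PF m v u" using u nb_PW by auto
  then have i: "i < m" "a \<in> {0,1,2}" and j: "j < m" "b \<in> {0,1,2}" and uv: "u \<noteq> v"
    and ij: "i \<le> Suc j" "j \<le> Suc i"
    using va ub by (auto simp: PF_char PW_eq)
  have c8: "card (?N v) \<le> 8"
  proof -
    have sub: "?N v \<subseteq> ({i-1, i, Suc i} \<times> {0,1,2}) - {v}"
    proof
      fix x assume "x \<in> ?N v"
      then have F: "PF m v x" using nb_PW by auto
      obtain c d where x: "x = (c,d)" by (cases x)
      have h: "c \<le> Suc i" "i \<le> Suc c" "d \<in> {0,1,2}" "x \<noteq> v"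
        using F unfolding PF_char PW_eq using va x by auto
      have "c = i - 1 \<or> c = i \<or> c = Suc i" using h(1,2) by arith
      then show "x \<in> ({i-1, i, Suc i} \<times> {0,1,2}) - {v}" using h x by blast
    qed
    have c3: "card {i-1, i, Suc i} \<le> 3" by (auto simp: card_insert_if)
    have "card ({i-1, i, Suc i} \<times> {0,1,2::nat}) = card {i-1, i, Suc i} * card {0,1,2::nat}"
      by (rule card_cartesian_product)
    then have "card ({i-1, i, Suc i} \<times> {0,1,2::nat}) \<le> 9"
      using c3 by simp
    moreover have "v \<in> {i-1, i, Suc i} \<times> {0,1,2}" using va i by auto
    ultimately have "card (({i-1, i, Suc i} \<times> {0,1,2}) - {v}) \<le> 8" by simp
    moreover have "card (?N v) \<le> card (({i-1, i, Suc i} \<times> {0,1,2}) - {v})"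
      by (rule card_mono[OF _ sub]) simp
    ultimately show ?thesis by linarith
  qed
  define i' where "i' = (if j \<noteq> i then j else if Suc i < m then Suc i else i - 1)"
  have i'c: "i' < m \<and> i' \<noteq> i \<and> i' \<le> Suc i \<and> i \<le> Suc i' \<and> i' \<le> Suc j \<and> j \<le> Suc i'"
  proof (cases "j = i")
    case False
    then show ?thesis using i j ij unfolding i'_def by simp
  next
    case True
    show ?thesis
    proof (cases "Suc i < m")
      case True
      then show ?thesis using \<open>j = i\<close> unfolding i'_def by simp
    next
      case False
      then have "i = m - 1" using i by simp
      then show ?thesis using \<open>j = i\<close> False m unfolding i'_def by (simp; arith)
    qed
  qed
  then have i': "i' < m" "i' \<noteq> i" "i' \<le> Suc i" "i \<le> Suc i'" "i' \<le> Suc j" "j \<le> Suc i'" by auto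
  let ?C = "({i, i'} \<times> {0,1,2::nat}) - {v, u}"
  have subC: "?C \<subseteq> ?N v \<inter> ?N u"
  proof
    fix x assume x: "x \<in> ?C"
    obtain c d where xc: "x = (c,d)" by (cases x)
    have c: "c = i \<or> c = i'" "d \<in> {0,1,2}" "x \<noteq> v" "x \<noteq> u" using x xc by auto
    have cm: "c < m" using c(1) i(1) i'(1) by auto
    have b1: "c \<le> Suc i \<and> i \<le> Suc c" using c(1) i' by auto
    have b2: "c \<le> Suc j \<and> j \<le> Suc c" using c(1) i' ij by auto
    have xW: "x \<in> PW m" using cm c(2) xc by (simp add: PW_eq)
    have "PF m v x" unfolding PF_char using v xW c(3) b1 va xc by auto
    moreover have "PF m u x" using Fvu xW c(4) b2 ub xc unfolding PF_char by auto
    ultimately have "PF m v x \<and> PF m u x" by simp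
    then show "x \<in> ?N v \<inter> ?N u" using nb_PW by auto
  qed
  have "card ({i, i'} \<times> {0,1,2::nat}) = card {i, i'} * card {0,1,2::nat}"
    by (rule card_cartesian_product)
  then have "card ({i, i'} \<times> {0,1,2::nat}) = 6" using i' by simp
  moreover have "{v, u} \<subseteq> {i, i'} \<times> {0,1,2::nat}" using va ub i j i'_def by auto
  moreover have "card {v, u} = 2" using uv by simp
  ultimately have "card ?C = 4" by (simp add: card_Diff_subset)
  then have c4: "card (?N v \<inter> ?N u) \<ge> 4"
    using card_mono[OF finite_Int[OF disjI1[OF finNP]] subC] by simp
  have "deg (?N v) (induced_rel (?N v) (PF m)) u = card (?N v \<inter> ?N u)" by (rule deg_induced[OF u])
  then show "real (deg (?N v) (induced_rel (?N v) (PF m)) u) \<ge> real (deg (PW m) (PF m) v) / 2"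
    using c8 c4 unfolding deg_def[of "PW m"] by simp
qed


theorem mainTheorem9:
  fixes V :: "'a set" and E :: "'a \<Rightarrow> 'a \<Rightarrow> bool"
  shows "(simple_graph V E \<and> connected_graph V E \<and> locally_dirac V E \<and> card V \<ge> 9
            \<longrightarrow> diam V E \<le> card V div 3 - 1)
       \<and> (\<forall>m::nat. m \<ge> 3 \<longrightarrow>
            (let W = strong_V (path_V m) K3_V;
                 F = strong_E (path_V m) (path_E m) K3_V K3_E
             in simple_graph W F \<and> connected_graph W F \<and> locally_dirac W F
                \<and> card W = 3 * m \<and> diam W F = card W div 3 - 1 \<and> diam W F = m - 1))"
proof (intro conjI allI impI)
  assume H: "simple_graph V E \<and> connected_graph V E \<and> locally_dirac V E \<and> card V \<ge> 9"
  interpret ldg V E using H by unfold_locales auto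
  show "diam V E \<le> card V div 3 - 1" using part1 H by auto
next
  fix m :: nat assume m: "m \<ge> 3"
  show "let W = strong_V (path_V m) K3_V;
                 F = strong_E (path_V m) (path_E m) K3_V K3_E
             in simple_graph W F \<and> connected_graph W F \<and> locally_dirac W F
                \<and> card W = 3 * m \<and> diam W F = card W div 3 - 1 \<and> diam W F = m - 1"
    unfolding Let_def using PW_sg PW_conn[OF m] PW_ld[OF m] PW_card PW_diam[OF m] by simp
qed

end
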